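(* Let $1<p<\infty$ and let $T:\ell_p\to\ell_p$ be the bounded linear operator defined by $Te_1=e_1$ and $Te_n=(1-\frac1n)e_n$ for all $n\ge2$, where $\{e_n\}$ is the standard unit vector basis of (real) $\ell_p$. Then $\|T\|=1$, $M_T=\{\pm e_1\}$, and $T$ is not a smooth point of $\mathbb{B}(\ell_p)$.
   Context: $\mathbb{B}(\ell_p)$ has the operator norm; $M_T=\{x\in\ell_p:\|x\|=1,\ \|Tx\|=\|T\|\}$. A nonzero element $x$ of a normed space $\mathbb{Z}$ is smooth if there is a unique $f\in\mathbb{Z}^*$ with $\|f\|=1$ and $f(x)=\|x\|$. *)

theory Defs
  imports "HOL-Analysis.Analysis"
begin

text \<open>Real sequence space l_p, sequences indexed by nat (index k corresponds to the
paper's index k+1).\<close>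

definition lp :: "real \<Rightarrow> (nat \<Rightarrow> real) set" where
  "lp p = {x. summable (\<lambda>n. \<bar>x n\<bar> powr p)}"

definition lp_norm :: "real \<Rightarrow> (nat \<Rightarrow> real) \<Rightarrow> real" where
  "lp_norm p x = (\<Sum>n. \<bar>x n\<bar> powr p) powr (1 / p)"

text \<open>Standard unit vectors: unit_vec k is e_(k+1).\<close>
definition unit_vec :: "nat \<Rightarrow> nat \<Rightarrow> real" where
  "unit_vec k = (\<lambda>n. if n = k then 1 else 0)"

text \<open>Bounded linear operators on l_p, represented extensionally (zero outside l_p).\<close>
definition bdd_ops :: "real \<Rightarrow> ((nat \<Rightarrow> real) \<Rightarrow> (nat \<Rightarrow> real)) set" where
  "bdd_ops p = {T.
     (\<forall>x. x \<notin> lp p \<longrightarrow> T x = (\<lambda>_. 0)) \<and>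
     (\<forall>x\<in>lp p. T x \<in> lp p) \<and>
     (\<forall>x\<in>lp p. \<forall>y\<in>lp p. T (\<lambda>k. x k + y k) = (\<lambda>k. T x k + T y k)) \<and>
     (\<forall>x\<in>lp p. \<forall>c. T (\<lambda>k. c * x k) = (\<lambda>k. c * T x k)) \<and>
     (\<exists>C. \<forall>x\<in>lp p. lp_norm p (T x) \<le> C * lp_norm p x)}"

definition op_norm :: "real \<Rightarrow> ((nat \<Rightarrow> real) \<Rightarrow> (nat \<Rightarrow> real)) \<Rightarrow> real" where
  "op_norm p T = Sup {lp_norm p (T x) | x. x \<in> lp p \<and> lp_norm p x = 1}"

definition norm_attain_set :: "real \<Rightarrow> ((nat \<Rightarrow> real) \<Rightarrow> (nat \<Rightarrow> real)) \<Rightarrow> (nat \<Rightarrow> real) set" where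
  "norm_attain_set p T = {x. x \<in> lp p \<and> lp_norm p x = 1 \<and> lp_norm p (T x) = op_norm p T}"

text \<open>Elements of the dual space of B(l_p): bounded linear functionals (values on B(l_p) only matter).\<close>
definition bdd_functional :: "real \<Rightarrow> (((nat \<Rightarrow> real) \<Rightarrow> (nat \<Rightarrow> real)) \<Rightarrow> real) \<Rightarrow> bool" where
  "bdd_functional p f \<longleftrightarrow>
     (\<forall>S\<in>bdd_ops p. \<forall>U\<in>bdd_ops p. f (\<lambda>x k. S x k + U x k) = f S + f U) \<and>
     (\<forall>S\<in>bdd_ops p. \<forall>c. f (\<lambda>x k. c * S x k) = c * f S) \<and>
     (\<exists>C. \<forall>S\<in>bdd_ops p. \<bar>f S\<bar> \<le> C * op_norm p S)"

definition dual_norm :: "real \<Rightarrow> (((nat \<Rightarrow> real) \<Rightarrow> (nat \<Rightarrow> real)) \<Rightarrow> real) \<Rightarrow> real" where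
  "dual_norm p f = Sup {\<bar>f S\<bar> | S. S \<in> bdd_ops p \<and> op_norm p S \<le> 1}"

definition supporting_functional ::
  "real \<Rightarrow> ((nat \<Rightarrow> real) \<Rightarrow> (nat \<Rightarrow> real)) \<Rightarrow> (((nat \<Rightarrow> real) \<Rightarrow> (nat \<Rightarrow> real)) \<Rightarrow> real) \<Rightarrow> bool" where
  "supporting_functional p T f \<longleftrightarrow>
     bdd_functional p f \<and> dual_norm p f = 1 \<and> f T = op_norm p T"

text \<open>Smooth point of B(l_p): nonzero, with a unique (as element of the dual, i.e. up to
values on B(l_p)) norming functional.\<close>
definition smooth_op :: "real \<Rightarrow> ((nat \<Rightarrow> real) \<Rightarrow> (nat \<Rightarrow> real)) \<Rightarrow> bool" where
  "smooth_op p T \<longleftrightarrow> T \<in> bdd_ops p \<and> T \<noteq> (\<lambda>_ _. 0) \<and>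
     (\<exists>f. supporting_functional p T f) \<and>
     (\<forall>f g. supporting_functional p T f \<and> supporting_functional p T g \<longrightarrow>
        (\<forall>S\<in>bdd_ops p. f S = g S))"

end

theory Submission
  imports Defs "HOL-Analysis.Analysis"
begin


lemma lp_iff: "x \<in> lp p \<longleftrightarrow> summable (\<lambda>n. \<bar>x n\<bar> powr p)"
  by (simp add: lp_def)

lemma lp_dom:
  assumes "x \<in> lp p" "\<And>n. \<bar>y n\<bar> \<le> \<bar>x n\<bar>" "0 < p"
  shows "y \<in> lp p"
  unfolding lp_iff
proof (rule summable_comparison_test[OF _ assms(1)[unfolded lp_iff]])
  show "\<exists>N. \<forall>n\<ge>N. norm (\<bar>y n\<bar> powr p) \<le> \<bar>x n\<bar> powr p"
    using assms by (auto intro!: powr_mono2)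
qed

lemma lp_scale:
  assumes "x \<in> lp p" "0 < p"
  shows "(\<lambda>k. c * x k) \<in> lp p"
proof -
  have "summable (\<lambda>n. \<bar>c\<bar> powr p * \<bar>x n\<bar> powr p)"
    using assms by (intro summable_mult) (simp add: lp_iff)
  then show ?thesis unfolding lp_iff by (simp add: abs_mult powr_mult)
qed

lemma abs_add_powr_le:
  fixes a b p :: real assumes "0 < p"
  shows "\<bar>a + b\<bar> powr p \<le> 2 powr p * (\<bar>a\<bar> powr p + \<bar>b\<bar> powr p)"
proof -
  have "\<bar>a + b\<bar> \<le> 2 * max \<bar>a\<bar> \<bar>b\<bar>" by auto
  hence "\<bar>a + b\<bar> powr p \<le> (2 * max \<bar>a\<bar> \<bar>b\<bar>) powr p"
    using assms by (intro powr_mono2) auto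
  also have "\<dots> = 2 powr p * max \<bar>a\<bar> \<bar>b\<bar> powr p" by (simp add: powr_mult)
  also have "max \<bar>a\<bar> \<bar>b\<bar> powr p \<le> \<bar>a\<bar> powr p + \<bar>b\<bar> powr p"
    by (simp add: max_def)
  finally show ?thesis by (simp add: mult_left_mono)
qed

lemma lp_add:
  assumes "x \<in> lp p" "y \<in> lp p" "0 < p"
  shows "(\<lambda>k. x k + y k) \<in> lp p"
  unfolding lp_iff
proof (rule summable_comparison_test)
  show "summable (\<lambda>n. 2 powr p * (\<bar>x n\<bar> powr p + \<bar>y n\<bar> powr p))"
    using assms by (intro summable_mult summable_add) (auto simp: lp_iff)
  show "\<exists>N. \<forall>n\<ge>N. norm (\<bar>x n + y n\<bar> powr p) \<le> 2 powr p * (\<bar>x n\<bar> powr p + \<bar>y n\<bar> powr p)"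
    using abs_add_powr_le[OF assms(3)] by auto
qed

lemma lp_norm_nonneg: "0 \<le> lp_norm p x"
  by (simp add: lp_norm_def)

lemma lp_coord:
  assumes "x \<in> lp p" "0 < p"
  shows "\<bar>x n\<bar> \<le> lp_norm p x"
proof -
  have "\<bar>x n\<bar> powr p \<le> (\<Sum>k. \<bar>x k\<bar> powr p)"
    using assms sum_le_suminf[of "\<lambda>k. \<bar>x k\<bar> powr p" "{n}"] by (auto simp: lp_iff)
  hence "(\<bar>x n\<bar> powr p) powr (1/p) \<le> (\<Sum>k. \<bar>x k\<bar> powr p) powr (1/p)"
    using assms by (intro powr_mono2) auto
  thus ?thesis using assms by (simp add: lp_norm_def powr_powr)
qed

lemma lp_unit: "0 < p \<Longrightarrow> unit_vec k \<in> lp p"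
  unfolding lp_iff unit_vec_def
  by (rule summable_finite[of "{k}"]) auto

lemma lp_norm_unit: "0 < p \<Longrightarrow> lp_norm p (unit_vec k) = 1"
proof -
  assume p: "0 < p"
  have "(\<Sum>n. \<bar>unit_vec k n\<bar> powr p) = (\<Sum>n\<in>{k}. \<bar>unit_vec k n\<bar> powr p)"
    by (rule suminf_finite) (auto simp: unit_vec_def)
  thus ?thesis by (simp add: lp_norm_def unit_vec_def)
qed

lemma tail_lp:
  assumes "x \<in> lp p" "0 < p"
  shows "(\<lambda>k. if k < N then 0 else x k) \<in> lp p"
  by (rule lp_dom[OF assms(1)]) (auto simp: assms)

lemma head_lp:
  assumes "x \<in> lp p" "0 < p"
  shows "(\<lambda>k. if k < N then x k else 0) \<in> lp p"
  by (rule lp_dom[OF assms(1)]) (auto simp: assms)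

lemma tail_norm_lim:
  assumes "x \<in> lp p" "0 < p"
  shows "(\<lambda>N. lp_norm p (\<lambda>k. if k < N then 0 else x k)) \<longlonglongrightarrow> 0"
proof -
  define a where "a = (\<lambda>n. \<bar>x n\<bar> powr p)"
  have sa: "summable a" using assms by (simp add: a_def lp_iff)
  have eq: "(\<Sum>k. \<bar>if k < N then 0 else x k\<bar> powr p) = suminf a - sum a {..<N}" for N
  proof -
    have "(\<lambda>k. \<bar>if k < N then 0 else x k\<bar> powr p) = (\<lambda>k. a k - (if k < N then a k else 0))"
      by (auto simp: a_def)
    moreover have s2: "summable (\<lambda>k. if k < N then a k else (0::real))"
      by (rule summable_finite[of "{..<N}"]) auto
    moreover have "(\<Sum>k. if k < N then a k else (0::real)) = sum a {..<N}"
      by (subst suminf_finite[of "{..<N}"]) auto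
    ultimately show ?thesis using suminf_diff[OF sa s2] by simp
  qed
  have "(\<lambda>N. suminf a - sum a {..<N}) \<longlonglongrightarrow> suminf a - suminf a"
    by (intro tendsto_diff tendsto_const summable_LIMSEQ sa)
  hence l: "(\<lambda>N. suminf a - sum a {..<N}) \<longlonglongrightarrow> 0" by simp
  have "(\<lambda>N. (suminf a - sum a {..<N}) powr (1/p)) \<longlonglongrightarrow> 0"
  proof (rule tendsto_zero_powrI[OF l tendsto_const])
    show "\<forall>\<^sub>F N in sequentially. 0 \<le> suminf a - sum a {..<N}"
      using sum_le_suminf[OF sa, of "{..<_}"] by (auto simp: a_def)
  qed (use assms in auto)
  thus ?thesis unfolding lp_norm_def eq .
qed



lemma bdd_opsD:
  assumes "T \<in> bdd_ops p"
  shows "\<And>x. x \<notin> lp p \<Longrightarrow> T x = (\<lambda>_. 0)"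
    "\<And>x. x \<in> lp p \<Longrightarrow> T x \<in> lp p"
    "\<And>x y. x \<in> lp p \<Longrightarrow> y \<in> lp p \<Longrightarrow> T (\<lambda>k. x k + y k) = (\<lambda>k. T x k + T y k)"
    "\<And>x c. x \<in> lp p \<Longrightarrow> T (\<lambda>k. c * x k) = (\<lambda>k. c * T x k)"
    "\<exists>C. \<forall>x\<in>lp p. lp_norm p (T x) \<le> C * lp_norm p x"
  using assms unfolding bdd_ops_def by blast+

lemma T_formula:
  assumes p: "0 < p" and T: "T \<in> bdd_ops p"
    and Tu: "\<And>k. T (unit_vec k) = (\<lambda>n. c k * unit_vec k n)"
    and x: "x \<in> lp p"
  shows "T x = (\<lambda>n. c n * x n)"
proof -
  define hd where "hd N = (\<lambda>k. if k < N then x k else 0)" for N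
  define tl where "tl N = (\<lambda>k. if k < N then 0 else x k)" for N
  have hdl: "hd N \<in> lp p" for N unfolding hd_def using head_lp[OF x p] .
  have tll: "tl N \<in> lp p" for N unfolding tl_def using tail_lp[OF x p] .
  have Thd: "T (hd N) = (\<lambda>n. if n < N then c n * x n else 0)" for N
  proof (induction N)
    case 0
    have "hd 0 = (\<lambda>k. 0 * x k)" by (simp add: hd_def)
    hence "T (hd 0) = (\<lambda>k. 0 * T x k)" using bdd_opsD(4)[OF T x, of 0] by simp
    thus ?case by simp
  next
    case (Suc N)
    have e: "hd (Suc N) = (\<lambda>k. hd N k + (x N * unit_vec N k))"
      by (rule ext) (auto simp: hd_def unit_vec_def less_Suc_eq)
    have "T (hd (Suc N)) = (\<lambda>k. T (hd N) k + T (\<lambda>k. x N * unit_vec N k) k)"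
      unfolding e by (rule bdd_opsD(3)[OF T hdl lp_scale[OF lp_unit[OF p] p]])
    also have "T (\<lambda>k. x N * unit_vec N k) = (\<lambda>k. x N * T (unit_vec N) k)"
      by (rule bdd_opsD(4)[OF T lp_unit[OF p]])
    finally show ?case using Suc unfolding Tu by (auto simp: unit_vec_def less_Suc_eq)
  qed
  obtain C where C: "\<forall>x\<in>lp p. lp_norm p (T x) \<le> C * lp_norm p x"
    using bdd_opsD(5)[OF T] by blast
  show ?thesis
  proof
    fix n
    have lim: "(\<lambda>N. C * lp_norm p (tl N)) \<longlonglongrightarrow> C * 0"
      by (intro tendsto_mult tendsto_const) (use tail_norm_lim[OF x p] in \<open>simp add: tl_def\<close>)
    have "\<bar>T x n - c n * x n\<bar> \<le> C * lp_norm p (tl N)" if "N > n" for N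
    proof -
      have "x = (\<lambda>k. hd N k + tl N k)" by (auto simp: hd_def tl_def)
      hence "T x = (\<lambda>k. T (hd N) k + T (tl N) k)"
        using bdd_opsD(3)[OF T hdl tll] by metis
      hence "T x n - c n * x n = T (tl N) n" using that by (simp add: Thd)
      also have "\<bar>\<dots>\<bar> \<le> lp_norm p (T (tl N))" by (rule lp_coord[OF bdd_opsD(2)[OF T tll] p])
      also have "\<dots> \<le> C * lp_norm p (tl N)" using C tll by blast
      finally show ?thesis .
    qed
    hence "\<bar>T x n - c n * x n\<bar> \<le> C * 0"
      by (intro LIMSEQ_le_const[OF lim]) (auto intro!: exI[of _ "Suc n"])
    thus "T x n = c n * x n" by simp
  qed
qed



lemma cluster_point:
  fixes h :: "nat \<Rightarrow> 'a \<Rightarrow> real" and B :: "'a \<Rightarrow> real"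
  assumes hb: "\<And>k a. a \<in> I \<Longrightarrow> \<bar>h k a\<bar> \<le> B a"
  shows "\<exists>g. \<forall>F \<epsilon> N. finite F \<and> F \<subseteq> I \<and> \<epsilon> > 0 \<longrightarrow> (\<exists>k\<ge>N. \<forall>a\<in>F. \<bar>g a - h k a\<bar> < \<epsilon>)"
proof -
  define X where "X = (\<lambda>a::'a. subtopology euclideanreal (cball 0 (B a)))"
  define P where "P = product_topology X I"
  have tX: "topspace (X a) = cball 0 (B a)" for a by (simp add: X_def)
  have cP: "compact_space P"
    unfolding P_def compact_space_product_topology X_def
    by (auto intro: compact_space_subtopology)
  define C where "C n = P closure_of ((\<lambda>k. restrict (h k) I) ` {n..})" for n
  have hin: "restrict (h k) I \<in> topspace P" for k
    using hb by (auto simp: P_def tX PiE_iff)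
  have "(\<Inter>n. C n) \<noteq> {}"
  proof (rule compact_space_imp_nest[OF cP])
    show "closedin P (C n)" for n by (simp add: C_def)
    show "C n \<noteq> {}" for n
    proof -
      have "restrict (h n) I \<in> C n" unfolding C_def
        by (rule set_mp[OF closure_of_subset]) (use hin in auto)
      thus ?thesis by auto
    qed
    show "decseq C" unfolding decseq_def C_def
      by (auto intro!: closure_of_mono)
  qed
  then obtain z where z: "\<And>n. z \<in> C n" by blast
  show ?thesis
  proof (intro exI[of _ z] allI impI)
    fix F \<epsilon> N assume FN: "finite F \<and> F \<subseteq> I \<and> (\<epsilon>::real) > 0"
    define U where "U = (\<Inter>a\<in>F. {f \<in> topspace P. f a \<in> ball (z a) \<epsilon>}) \<inter> topspace P"
    have zt: "z \<in> topspace P" using z[of N] by (simp add: C_def in_closure_of)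
    have "openin P U" unfolding U_def
    proof (rule openin_INT)
      show "finite F" using FN by simp
      fix a assume a: "a \<in> F"
      have "openin (X a) (cball 0 (B a) \<inter> ball (z a) \<epsilon>)"
        unfolding X_def by (rule openin_subtopology_Int2) auto
      hence "openin P {f \<in> topspace P. f a \<in> cball 0 (B a) \<inter> ball (z a) \<epsilon>}"
        unfolding P_def using a FN
        by (intro openin_continuous_map_preimage[OF continuous_map_product_projection]) auto
      moreover have "{f \<in> topspace P. f a \<in> cball 0 (B a) \<inter> ball (z a) \<epsilon>} =
          {f \<in> topspace P. f a \<in> ball (z a) \<epsilon>}"
        using a FN by (auto simp: P_def tX PiE_iff)
      ultimately show "openin P {f \<in> topspace P. f a \<in> ball (z a) \<epsilon>}" by simp
    qed
    moreover have "z \<in> U" using zt FN by (auto simp: U_def)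
    ultimately obtain y where y: "y \<in> (\<lambda>k. restrict (h k) I) ` {N..}" "y \<in> U"
      using z[of N] unfolding C_def in_closure_of by blast
    then obtain k where k: "k \<ge> N" "y = restrict (h k) I" by auto
    have "\<forall>a\<in>F. \<bar>z a - h k a\<bar> < \<epsilon>"
      using y(2) k FN by (force simp: U_def dist_real_def)
    thus "\<exists>k\<ge>N. \<forall>a\<in>F. \<bar>z a - h k a\<bar> < \<epsilon>" using k by blast
  qed
qed



lemma op_norm_ge:
  assumes S: "S \<in> bdd_ops p" and x: "x \<in> lp p" "lp_norm p x = 1"
  shows "lp_norm p (S x) \<le> op_norm p S"
proof -
  obtain C where C: "\<forall>x\<in>lp p. lp_norm p (S x) \<le> C * lp_norm p x"
    using bdd_opsD(5)[OF S] by blast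
  show ?thesis unfolding op_norm_def
    by (rule cSup_upper) (use x C in \<open>auto intro!: bdd_aboveI[of _ C]\<close>)
qed

lemma op_norm_coord:
  assumes S: "S \<in> bdd_ops p" and p: "0 < p"
  shows "\<bar>S (unit_vec k) n\<bar> \<le> op_norm p S"
  using lp_coord[OF bdd_opsD(2)[OF S lp_unit[OF p]] p, of k n]
    op_norm_ge[OF S lp_unit[OF p] lp_norm_unit[OF p], of k] by linarith

lemma powr_inv_eq_one:
  fixes s p :: real assumes "0 \<le> s" "0 < p" "s powr (1/p) = 1"
  shows "s = 1"
proof -
  have "s \<noteq> 0" using assms by auto
  have "(s powr (1/p)) powr p = s powr (1/p * p)" by (rule powr_powr)
  also have "\<dots> = s" using assms \<open>s \<noteq> 0\<close> by simp
  finally have "s = (s powr (1/p)) powr p" by simp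
  also have "\<dots> = 1" using assms(3) by simp
  finally show ?thesis .
qed



lemma diag_norm:
  fixes c :: "nat \<Rightarrow> real"
  assumes p: "0 < p" and c0: "c 0 = 1" and cpos: "\<And>n. n \<ge> 1 \<Longrightarrow> 0 < c n \<and> c n < 1"
    and x: "x \<in> lp p" "lp_norm p x = 1"
  shows "lp_norm p (\<lambda>n. c n * x n) \<le> 1"
    "lp_norm p (\<lambda>n. c n * x n) = 1 \<Longrightarrow> x = unit_vec 0 \<or> x = (\<lambda>n. - unit_vec 0 n)"
proof -
  define a where "a = (\<lambda>n. \<bar>x n\<bar> powr p)"
  define b where "b = (\<lambda>n. \<bar>c n * x n\<bar> powr p)"
  have sa: "summable a" using x by (simp add: a_def lp_iff)
  have a0: "0 \<le> a n" for n by (simp add: a_def)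
  have b0: "0 \<le> b n" for n by (simp add: b_def)
  have ccase: "0 \<le> c n \<and> c n \<le> 1" for n
    using cpos[of n] c0 by (cases "n = 0") auto
  have ba: "b n \<le> a n" for n
  proof -
    have "\<bar>c n * x n\<bar> \<le> \<bar>x n\<bar>" using ccase[of n]
      by (simp add: abs_mult abs_of_nonneg mult_left_le_one_le)
    thus ?thesis unfolding a_def b_def using p by (intro powr_mono2) auto
  qed
  have sb: "summable b"
    by (rule summable_comparison_test[OF _ sa]) (use ba b0 in auto)
  have suma: "suminf a = 1"
    by (rule powr_inv_eq_one[OF suminf_nonneg[OF sa a0] p]) (use x in \<open>simp add: lp_norm_def a_def\<close>)
  have sble: "suminf b \<le> 1" using suminf_le[OF ba sb sa] suma by simp
  have nb: "lp_norm p (\<lambda>n. c n * x n) = suminf b powr (1/p)"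
    by (simp add: lp_norm_def b_def)
  show "lp_norm p (\<lambda>n. c n * x n) \<le> 1"
    unfolding nb using sble suminf_nonneg[OF sb b0] p
    by (metis powr_mono2 powr_one_eq_one less_eq_real_def zero_less_divide_1_iff)
  assume eq1: "lp_norm p (\<lambda>n. c n * x n) = 1"
  have sumb: "suminf b = 1"
    by (rule powr_inv_eq_one[OF suminf_nonneg[OF sb b0] p]) (use eq1 nb in simp)
  have "(\<Sum>n. a n - b n) = 0" using suminf_diff[OF sa sb] suma sumb by simp
  hence abeq: "a n - b n = 0" for n
    using suminf_eq_zero_iff[OF summable_diff[OF sa sb]] ba by (simp add: le_diff_eq)
  have xz: "x n = 0" if "n \<ge> 1" for n
  proof (rule ccontr)
    assume "x n \<noteq> 0"
    have "b n = c n powr p * a n"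
      using cpos[OF that] by (simp add: a_def b_def abs_mult powr_mult)
    moreover have "c n powr p < 1"
      using cpos[OF that] p powr_less_mono2[of p "c n" 1] by simp
    moreover have "a n > 0" using \<open>x n \<noteq> 0\<close> by (simp add: a_def)
    ultimately have "b n < a n" by simp
    thus False using abeq[of n] by simp
  qed
  have "suminf a = a 0"
  proof -
    have "suminf a = (\<Sum>n\<in>{0}. a n)"
      by (rule suminf_finite) (use xz in \<open>auto simp: a_def\<close>)
    thus ?thesis by simp
  qed
  hence "\<bar>x 0\<bar> powr p = 1" using suma by (simp add: a_def)
  hence "\<bar>x 0\<bar> = 1"
    using powr_inv_eq_one[of "\<bar>x 0\<bar>" "1/p"] p by simp
  hence "x 0 = 1 \<or> x 0 = -1" by auto
  thus "x = unit_vec 0 \<or> x = (\<lambda>n. - unit_vec 0 n)"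
  proof
    assume "x 0 = 1" thus ?thesis using xz by (auto simp: unit_vec_def fun_eq_iff)
  next
    assume "x 0 = -1" thus ?thesis using xz by (auto simp: unit_vec_def fun_eq_iff)
  qed
qed



lemma abs3_aux:
  fixes A b c x y t :: real
  assumes "\<bar>A - (x + y)\<bar> < t/3" "\<bar>b - x\<bar> < t/3" "\<bar>c - y\<bar> < t/3"
  shows "\<bar>A - (b + c)\<bar> \<le> 0 + t"
  using assms unfolding abs_less_iff abs_le_iff by auto

lemma sc_aux:
  fixes A a x G d :: real
  assumes "\<bar>A - a * x\<bar> < d" "\<bar>G - x\<bar> < d"
  shows "\<bar>A - a * G\<bar> \<le> d + \<bar>a\<bar> * d"
proof -
  have "A - a * G = (A - a * x) + a * (x - G)" by (simp add: algebra_simps)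
  hence "\<bar>A - a * G\<bar> \<le> \<bar>A - a * x\<bar> + \<bar>a\<bar> * \<bar>x - G\<bar>"
    by (metis abs_mult abs_triangle_ineq)
  also have "\<dots> \<le> d + \<bar>a\<bar> * d"
    using assms by (intro add_mono mult_left_mono) (auto simp: abs_minus_commute)
  finally show ?thesis .
qed

theorem mainTheorem8:
  fixes p :: real and T :: "(nat \<Rightarrow> real) \<Rightarrow> (nat \<Rightarrow> real)"
  assumes "1 < p"
    and "T \<in> bdd_ops p"
    and "T (unit_vec 0) = unit_vec 0"
    and "\<And>k. k \<ge> 1 \<Longrightarrow> T (unit_vec k) = (\<lambda>n. (1 - 1 / real (k + 1)) * unit_vec k n)"
  shows "op_norm p T = 1 \<and> norm_attain_set p T = {unit_vec 0, (\<lambda>n. - unit_vec 0 n)}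
         \<and> \<not> smooth_op p T"
proof -
  have p: "0 < p" using assms(1) by simp
  have Tb: "T \<in> bdd_ops p" by fact
  define c where "c n = (if n = 0 then 1 else 1 - 1 / real (n + 1))" for n
  have c0: "c 0 = 1" by (simp add: c_def)
  have cpos: "0 < c n \<and> c n < 1" if "n \<ge> 1" for n
    using that by (auto simp: c_def field_simps)
  have Tu: "T (unit_vec k) = (\<lambda>n. c k * unit_vec k n)" for k
    using assms(3) assms(4)[of k] by (cases "k = 0") (auto simp: c_def)
  have Tx: "T x = (\<lambda>n. c n * x n)" if "x \<in> lp p" for x
    by (rule T_formula[OF p Tb Tu that])
  have e0: "unit_vec 0 \<in> lp p" "lp_norm p (unit_vec 0) = 1" using lp_unit[OF p] lp_norm_unit[OF p] by auto
  have Te0: "T (unit_vec 0) = unit_vec 0" by fact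
  have me0: "(\<lambda>n. - unit_vec 0 n) \<in> lp p" using lp_scale[OF e0(1) p, of "-1"] by simp
  have nme0: "lp_norm p (\<lambda>n. - unit_vec 0 n) = 1" using e0(2) by (simp add: lp_norm_def)
  have Tme0: "T (\<lambda>n. - unit_vec 0 n) = (\<lambda>n. - unit_vec 0 n)"
    using Tx[OF me0] by (auto simp: c_def unit_vec_def fun_eq_iff)
  have opT: "op_norm p T = 1" unfolding op_norm_def
  proof (rule cSup_eq_maximum)
    show "1 \<in> {lp_norm p (T x) |x. x \<in> lp p \<and> lp_norm p x = 1}"
      using e0 Te0 by force
    show "\<And>y. y \<in> {lp_norm p (T x) |x. x \<in> lp p \<and> lp_norm p x = 1} \<Longrightarrow> y \<le> 1"
      using diag_norm(1)[where c=c, OF p c0 cpos] Tx by auto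
  qed
  have MT: "norm_attain_set p T = {unit_vec 0, (\<lambda>n. - unit_vec 0 n)}"
  proof
    show "norm_attain_set p T \<subseteq> {unit_vec 0, \<lambda>n. - unit_vec 0 n}"
      unfolding norm_attain_set_def opT
    proof (rule subsetI)
      fix x assume "x \<in> {x \<in> lp p. lp_norm p x = 1 \<and> lp_norm p (T x) = 1}"
      hence x: "x \<in> lp p" "lp_norm p x = 1" "lp_norm p (T x) = 1" by auto
      show "x \<in> {unit_vec 0, \<lambda>n. - unit_vec 0 n}"
        using diag_norm(2)[where c=c, OF p c0 cpos x(1,2)] x(3) Tx[OF x(1)] by simp
    qed
    show "{unit_vec 0, \<lambda>n. - unit_vec 0 n} \<subseteq> norm_attain_set p T"
      unfolding norm_attain_set_def opT using e0 Te0 me0 nme0 Tme0 by auto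
  qed
  define P where "P x = (if x \<in> lp p then (\<lambda>n::nat. if n = 0 then x 0 else 0) else (\<lambda>_. 0::real))" for x :: "nat \<Rightarrow> real"
  have Pb: "P \<in> bdd_ops p"
    unfolding bdd_ops_def
  proof (intro CollectI conjI ballI allI impI)
    show "P x = (\<lambda>_. 0)" if "x \<notin> lp p" for x using that by (simp add: P_def)
    show "P x \<in> lp p" if "x \<in> lp p" for x
      using that by (auto simp: P_def intro!: lp_dom[OF that _ p])
    show "P (\<lambda>k. x k + y k) = (\<lambda>k. P x k + P y k)" if "x \<in> lp p" "y \<in> lp p" for x y
      using that lp_add[OF that p] by (auto simp: P_def)
    show "P (\<lambda>k. a * x k) = (\<lambda>k. a * P x k)" if "x \<in> lp p" for x a
      using that lp_scale[OF that p, of a] by (auto simp: P_def)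
    show "\<exists>C. \<forall>x\<in>lp p. lp_norm p (P x) \<le> C * lp_norm p x"
    proof (intro exI[of _ 1] ballI)
      fix x assume x: "x \<in> lp p"
      have "(\<Sum>n::nat. \<bar>if n = 0 then x 0 else 0\<bar> powr p) = \<bar>x 0\<bar> powr p"
        by (subst suminf_finite[of "{0}"]) auto
      hence "lp_norm p (P x) = (\<bar>x 0\<bar> powr p) powr (1/p)" using x by (simp add: P_def lp_norm_def)
      also have "\<dots> = \<bar>x 0\<bar>" using p by (simp add: powr_powr)
      also have "\<dots> \<le> lp_norm p x" by (rule lp_coord[OF x p])
      finally show "lp_norm p (P x) \<le> 1 * lp_norm p x" by simp
    qed
  qed
  have Pe: "P (unit_vec k) = (\<lambda>n. if n = 0 then unit_vec k 0 else 0)" for k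
    using lp_unit[OF p] by (simp add: P_def)
  define f where "f S = S (unit_vec 0) 0" for S :: "(nat \<Rightarrow> real) \<Rightarrow> (nat \<Rightarrow> real)"
  have fb: "\<bar>f S\<bar> \<le> op_norm p S" if "S \<in> bdd_ops p" for S
    unfolding f_def by (rule op_norm_coord[OF that p])
  have fT: "f T = 1" using Te0 by (simp add: f_def unit_vec_def)
  have sf: "supporting_functional p T f"
    unfolding supporting_functional_def bdd_functional_def
  proof (intro conjI ballI allI)
    show "f (\<lambda>x k. S x k + U x k) = f S + f U" for S U by (simp add: f_def)
    show "f (\<lambda>x k. a * S x k) = a * f S" for S a by (simp add: f_def)
    show "\<exists>C. \<forall>S\<in>bdd_ops p. \<bar>f S\<bar> \<le> C * op_norm p S" using fb by (intro exI[of _ 1]) auto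
    show "f T = op_norm p T" using fT opT by simp
    show "dual_norm p f = 1" unfolding dual_norm_def
    proof (rule cSup_eq_maximum)
      show "1 \<in> {\<bar>f S\<bar> |S. S \<in> bdd_ops p \<and> op_norm p S \<le> 1}"
        using Tb opT fT by force
      show "\<And>y. y \<in> {\<bar>f S\<bar> |S. S \<in> bdd_ops p \<and> op_norm p S \<le> 1} \<Longrightarrow> y \<le> 1"
        using fb by force
    qed
  qed
  have fP: "f P = 1" using Pe by (simp add: f_def unit_vec_def)
  \<comment> \<open>second functional: a cluster point of diagonal entries\<close>
  define h where "h k S = S (unit_vec k) k" for k and S :: "(nat \<Rightarrow> real) \<Rightarrow> (nat \<Rightarrow> real)"
  define I where "I = {S. bdd_above (range (\<lambda>k. \<bar>h k S\<bar>))}"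
  define B where "B S = Sup (range (\<lambda>k. \<bar>h k S\<bar>))" for S
  have "\<exists>g. \<forall>F \<epsilon> N. finite F \<and> F \<subseteq> I \<and> \<epsilon> > 0 \<longrightarrow> (\<exists>k\<ge>N. \<forall>a\<in>F. \<bar>g a - h k a\<bar> < \<epsilon>)"
  proof (rule cluster_point[of I h B])
    fix k S assume "S \<in> I"
    hence "bdd_above (range (\<lambda>k. \<bar>h k S\<bar>))" by (simp add: I_def)
    thus "\<bar>h k S\<bar> \<le> B S" unfolding B_def by (rule cSup_upper[rotated]) simp
  qed
  then obtain g where g0: "\<forall>F \<epsilon> N. finite F \<and> F \<subseteq> I \<and> \<epsilon> > 0 \<longrightarrow> (\<exists>k\<ge>N. \<forall>a\<in>F. \<bar>g a - h k a\<bar> < \<epsilon>)"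
    by (rule exE)
  have g: "\<exists>k\<ge>N. \<forall>a\<in>F. \<bar>g a - h k a\<bar> < \<epsilon>" if "finite F" "F \<subseteq> I" "\<epsilon> > 0" for F \<epsilon> N
    using g0 that by simp
  have hb: "\<bar>h k S\<bar> \<le> op_norm p S" if "S \<in> bdd_ops p" for S k
    unfolding h_def by (rule op_norm_coord[OF that p])
  have bI: "S \<in> bdd_ops p \<Longrightarrow> S \<in> I" for S
    unfolding I_def by (rule CollectI, rule bdd_aboveI[of _ "op_norm p S"]) (use hb in auto)
  have sumI: "(\<lambda>x k. S x k + U x k) \<in> I" if "S \<in> bdd_ops p" "U \<in> bdd_ops p" for S U
    unfolding I_def
  proof (rule CollectI, rule bdd_aboveI[of _ "op_norm p S + op_norm p U"], clarify)
    fix k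
    show "\<bar>h k (\<lambda>x k. S x k + U x k)\<bar> \<le> op_norm p S + op_norm p U"
      using hb[OF that(1), of k] hb[OF that(2), of k] by (simp add: h_def)
  qed
  have scI: "(\<lambda>x k. a * S x k) \<in> I" if "S \<in> bdd_ops p" for S a
    unfolding I_def
  proof (rule CollectI, rule bdd_aboveI[of _ "\<bar>a\<bar> * op_norm p S"], clarify)
    fix k
    show "\<bar>h k (\<lambda>x k. a * S x k)\<bar> \<le> \<bar>a\<bar> * op_norm p S"
      using hb[OF that, of k] by (simp add: h_def abs_mult mult_left_mono)
  qed
  have gb: "\<bar>g S\<bar> \<le> op_norm p S" if S: "S \<in> bdd_ops p" for S
  proof (rule field_le_epsilon)
    fix e :: real assume e: "0 < e"
    obtain k where "\<bar>g S - h k S\<bar> < e" using g[of "{S}" e 0] bI[OF S] e by auto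
    thus "\<bar>g S\<bar> \<le> op_norm p S + e" using hb[OF S, of k] by linarith
  qed
  have gadd: "g (\<lambda>x k. S x k + U x k) = g S + g U" if SU: "S \<in> bdd_ops p" "U \<in> bdd_ops p" for S U
  proof -
    have "\<bar>g (\<lambda>x k. S x k + U x k) - (g S + g U)\<bar> \<le> 0"
    proof (rule field_le_epsilon)
      fix e :: real assume e: "0 < e"
      obtain k where k: "\<forall>a\<in>{S, U, (\<lambda>x k. S x k + U x k)}. \<bar>g a - h k a\<bar> < e/3"
        using g[of "{S, U, (\<lambda>x k. S x k + U x k)}" "e/3" 0] bI[OF SU(1)] bI[OF SU(2)] sumI[OF SU] e
        by auto
      have "h k (\<lambda>x k. S x k + U x k) = h k S + h k U" by (simp add: h_def)
      moreover have "\<bar>g S - h k S\<bar> < e/3" "\<bar>g U - h k U\<bar> < e/3"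
        "\<bar>g (\<lambda>x k. S x k + U x k) - h k (\<lambda>x k. S x k + U x k)\<bar> < e/3"
        using k by blast+
      ultimately show "\<bar>g (\<lambda>x k. S x k + U x k) - (g S + g U)\<bar> \<le> 0 + e"
        by (intro abs3_aux[of _ "h k S" "h k U"]) simp_all
    qed
    thus ?thesis by simp
  qed
  have gsc: "g (\<lambda>x k. a * S x k) = a * g S" if S: "S \<in> bdd_ops p" for S a
  proof -
    have "\<bar>g (\<lambda>x k. a * S x k) - a * g S\<bar> \<le> 0"
    proof (rule field_le_epsilon)
      fix e :: real assume e: "0 < e"
      define d where "d = e / (1 + \<bar>a\<bar>)"
      have d: "0 < d" using e by (simp add: d_def)
      obtain k where k: "\<forall>b\<in>{S, (\<lambda>x k. a * S x k)}. \<bar>g b - h k b\<bar> < d"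
        using g[of "{S, (\<lambda>x k. a * S x k)}" d 0] bI[OF S] scI[OF S] d by auto
      have hk: "h k (\<lambda>x k. a * S x k) = a * h k S" by (simp add: h_def)
      have k1: "\<bar>g (\<lambda>x k. a * S x k) - a * h k S\<bar> < d" using k hk by auto
      have k2: "\<bar>g S - h k S\<bar> < d" using k by auto
      have "\<bar>g (\<lambda>x k. a * S x k) - a * g S\<bar> \<le> d + \<bar>a\<bar> * d"
        by (rule sc_aux[OF k1 k2])
      also have "\<dots> = d * (1 + \<bar>a\<bar>)" by (simp add: algebra_simps)
      also have "\<dots> = e" unfolding d_def
        by (metis abs_ge_zero add_pos_nonneg less_numeral_extra(1) nonzero_divide_eq_eq order_less_irrefl)
      finally show "\<bar>g (\<lambda>x k. a * S x k) - a * g S\<bar> \<le> 0 + e" by simp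
    qed
    thus ?thesis by simp
  qed
  have hT: "\<bar>1 - h k T\<bar> \<le> 1 / real (k + 1)" for k
    using Tu[of k] by (auto simp: h_def c_def unit_vec_def)
  have gT: "g T = 1"
  proof -
    have "\<bar>g T - 1\<bar> \<le> 0"
    proof (rule field_le_epsilon)
      fix e :: real assume e: "0 < e"
      obtain N :: nat where N: "inverse (real (Suc N)) < e/2" using reals_Archimedean[of "e/2"] e by auto
      obtain k where k: "k \<ge> N" "\<bar>g T - h k T\<bar> < e/2"
        using g[of "{T}" "e/2" N] bI[OF Tb] e by auto
      have "1 / real (k + 1) \<le> inverse (real (Suc N))"
        using k(1) by (simp add: field_simps)
      thus "\<bar>g T - 1\<bar> \<le> 0 + e" using hT[of k] k N by linarith
    qed
    thus ?thesis by simp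
  qed
  have sg: "supporting_functional p T g"
    unfolding supporting_functional_def bdd_functional_def
  proof (intro conjI ballI allI)
    show "g (\<lambda>x k. S x k + U x k) = g S + g U" if "S \<in> bdd_ops p" "U \<in> bdd_ops p" for S U
      using gadd that by blast
    show "g (\<lambda>x k. a * S x k) = a * g S" if "S \<in> bdd_ops p" for S a using gsc that by blast
    show "\<exists>C. \<forall>S\<in>bdd_ops p. \<bar>g S\<bar> \<le> C * op_norm p S" using gb by (intro exI[of _ 1]) auto
    show "g T = op_norm p T" using gT opT by simp
    show "dual_norm p g = 1" unfolding dual_norm_def
    proof (rule cSup_eq_maximum)
      show "1 \<in> {\<bar>g S\<bar> |S. S \<in> bdd_ops p \<and> op_norm p S \<le> 1}"
        using Tb opT gT by force
      show "\<And>y. y \<in> {\<bar>g S\<bar> |S. S \<in> bdd_ops p \<and> op_norm p S \<le> 1} \<Longrightarrow> y \<le> 1"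
        using gb by force
    qed
  qed
  have gP: "g P = 0"
  proof -
    have "\<bar>g P\<bar> \<le> 0"
    proof (rule field_le_epsilon)
      fix e :: real assume e: "0 < e"
      obtain k where k: "k \<ge> 1" "\<bar>g P - h k P\<bar> < e"
        using g[of "{P}" e 1] bI[OF Pb] e by auto
      have "h k P = 0" using k(1) Pe[of k] by (simp add: h_def)
      thus "\<bar>g P\<bar> \<le> 0 + e" using k by simp
    qed
    thus ?thesis by simp
  qed
  have "\<not> smooth_op p T"
  proof
    assume "smooth_op p T"
    hence "f P = g P" using sf sg Pb unfolding smooth_op_def by blast
    thus False using fP gP by simp
  qed
  with opT MT show ?thesis by blast
qed

end
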